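(* Let $p>1$ and let $\varphi$ be an analytic self-map of $\mathbb{D}$ with $\varphi\in S^p$. Then the following are equivalent: (i) $D_\varphi:S^p\to S^p$ is compact; (ii) $C_\varphi:H^p\to S^p$ is compact; (iii) $DC_\varphi:H^p\to H^p$ is compact.
   Context: $\mathbb{D}$ is the open unit disk. For $p>1$, $H^p$ is the Hardy space on $\mathbb{D}$ with norm $\|g\|_{H^p}^p=\sup_{0<r<1}\int_0^{2\pi}|g(re^{i\theta})|^p\frac{d\theta}{2\pi}$; $S^p$ is the space of analytic $f$ on $\mathbb{D}$ with $f'\in H^p$, normed by $\|f\|_{S^p}=|f(0)|+\|f'\|_{H^p}$. $C_\varphi f=f\circ\varphi$, $D_\varphi f=f'\circ\varphi$, and $DC_\varphi f=(f\circ\varphi)'$. *)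

theory Defs
  imports "HOL-Complex_Analysis.Complex_Analysis"
begin

definition int_mean :: "real \<Rightarrow> (complex \<Rightarrow> complex) \<Rightarrow> real \<Rightarrow> real" where
  "int_mean p g r = integral {0..2*pi} (\<lambda>\<theta>. norm (g (complex_of_real r * cis \<theta>)) powr p) / (2*pi)"

definition hardy :: "real \<Rightarrow> (complex \<Rightarrow> complex) set" where
  "hardy p = {g. g holomorphic_on ball 0 1 \<and> bdd_above (int_mean p g ` {0<..<1})}"

definition hardy_norm :: "real \<Rightarrow> (complex \<Rightarrow> complex) \<Rightarrow> real" where
  "hardy_norm p g = (SUP r\<in>{0<..<1}. int_mean p g r) powr (1/p)"

definition Sp :: "real \<Rightarrow> (complex \<Rightarrow> complex) set" where
  "Sp p = {f. f holomorphic_on ball 0 1 \<and> deriv f \<in> hardy p}"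

definition Sp_norm :: "real \<Rightarrow> (complex \<Rightarrow> complex) \<Rightarrow> real" where
  "Sp_norm p f = norm (f 0) + hardy_norm p (deriv f)"

definition compact_op ::
  "((complex \<Rightarrow> complex) \<Rightarrow> (complex \<Rightarrow> complex)) \<Rightarrow> (complex \<Rightarrow> complex) set \<Rightarrow> ((complex \<Rightarrow> complex) \<Rightarrow> real)
    \<Rightarrow> (complex \<Rightarrow> complex) set \<Rightarrow> ((complex \<Rightarrow> complex) \<Rightarrow> real) \<Rightarrow> bool" where
  "compact_op T X NX Y NY \<longleftrightarrow>
     (\<forall>f\<in>X. T f \<in> Y) \<and>
     (\<forall>u::nat \<Rightarrow> complex \<Rightarrow> complex. (\<forall>n. u n \<in> X) \<and> bdd_above (range (\<lambda>n. NX (u n))) \<longrightarrow>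
        (\<exists>r g. strict_mono r \<and> g \<in> Y \<and> (\<lambda>n. NY (\<lambda>z. T (u (r n)) z - g z)) \<longlonglongrightarrow> 0))"

definition comp_op :: "(complex \<Rightarrow> complex) \<Rightarrow> (complex \<Rightarrow> complex) \<Rightarrow> (complex \<Rightarrow> complex)" where
  "comp_op \<phi> f = f \<circ> \<phi>"

definition deriv_comp_op :: "(complex \<Rightarrow> complex) \<Rightarrow> (complex \<Rightarrow> complex) \<Rightarrow> (complex \<Rightarrow> complex)" where
  "deriv_comp_op \<phi> f = deriv f \<circ> \<phi>"

definition diff_comp_op :: "(complex \<Rightarrow> complex) \<Rightarrow> (complex \<Rightarrow> complex) \<Rightarrow> (complex \<Rightarrow> complex)" where
  "diff_comp_op \<phi> f = deriv (f \<circ> \<phi>)"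

end

theory Submission imports Defs begin

lemma int_mean_nonneg: "0 \<le> int_mean p f r"
proof -
  have "0 \<le> integral {0..2*pi} (\<lambda>\<theta>. norm (f (complex_of_real r * cis \<theta>)) powr p)"
    by (cases "(\<lambda>\<theta>. norm (f (complex_of_real r * cis \<theta>)) powr p) integrable_on {0..2*pi}")
       (auto intro!: integral_nonneg simp: not_integrable_integral)
  thus ?thesis unfolding int_mean_def by simp
qed

lemma int_mean_le:
  assumes "f \<in> hardy p" "0 < r" "r < 1" "p > 0"
  shows "int_mean p f r \<le> hardy_norm p f powr p"
proof -
  have bdd: "bdd_above (int_mean p f ` {0<..<1})" using assms(1) unfolding hardy_def by auto
  have le: "int_mean p f r \<le> (SUP r\<in>{0<..<1}. int_mean p f r)"
    by (rule cSUP_upper[OF _ bdd]) (use assms in auto)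
  have "0 \<le> (SUP r\<in>{0<..<1}. int_mean p f r)" using le int_mean_nonneg order_trans by blast
  hence "hardy_norm p f powr p = (SUP r\<in>{0<..<1}. int_mean p f r)"
    unfolding hardy_norm_def using assms by (simp add: powr_powr)
  with le show ?thesis by simp
qed

lemma hardy_norm_nonneg: "0 \<le> hardy_norm p f"
  unfolding hardy_norm_def by simp

lemma int_mean_cong:
  assumes "\<And>z. z \<in> ball 0 1 \<Longrightarrow> f z = g z" "0 < r" "r < 1"
  shows "int_mean p f r = int_mean p g r"
proof -
  have "\<And>\<theta>. f (complex_of_real r * cis \<theta>) = g (complex_of_real r * cis \<theta>)"
    using assms by (intro assms(1)) (simp add: norm_mult)
  thus ?thesis unfolding int_mean_def by simp
qed

lemma hardy_cong:
  assumes "\<And>z. z \<in> ball 0 1 \<Longrightarrow> f z = g z"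
  shows "f \<in> hardy p \<longleftrightarrow> g \<in> hardy p" "hardy_norm p f = hardy_norm p g"
proof -
  have im: "int_mean p f ` {0<..<1} = int_mean p g ` {0<..<1}"
    using int_mean_cong[OF assms] by (intro image_cong) auto
  have "f holomorphic_on ball 0 1 \<longleftrightarrow> g holomorphic_on ball 0 1"
    using assms by (intro holomorphic_cong) auto
  with im show "f \<in> hardy p \<longleftrightarrow> g \<in> hardy p" unfolding hardy_def by simp
  show "hardy_norm p f = hardy_norm p g" unfolding hardy_norm_def using im by simp
qed

lemma deriv_cong_ball:
  assumes "\<And>z. z \<in> ball 0 1 \<Longrightarrow> f z = g z" "z \<in> ball (0::complex) 1"
  shows "deriv f z = deriv g z"
proof (rule deriv_cong_ev)
  show "eventually (\<lambda>x. f x = g x) (nhds z)"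
    using eventually_nhds_in_open[of "ball 0 1" z] assms
    by (auto elim!: eventually_mono)
qed simp

lemma Sp_cong:
  assumes "\<And>z. z \<in> ball 0 1 \<Longrightarrow> f z = g z"
  shows "f \<in> Sp p \<longleftrightarrow> g \<in> Sp p" "Sp_norm p f = Sp_norm p g"
proof -
  have d: "\<And>z. z \<in> ball 0 1 \<Longrightarrow> deriv f z = deriv g z" using deriv_cong_ball[OF assms] .
  have "f holomorphic_on ball 0 1 \<longleftrightarrow> g holomorphic_on ball 0 1"
    using assms by (intro holomorphic_cong) auto
  thus "f \<in> Sp p \<longleftrightarrow> g \<in> Sp p" unfolding Sp_def using hardy_cong(1)[OF d] by simp
  show "Sp_norm p f = Sp_norm p g" unfolding Sp_norm_def using hardy_cong(2)[OF d] assms[of 0] by simp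
qed

lemma hardy_le_Sp: "hardy_norm p (deriv f) \<le> Sp_norm p f"
  unfolding Sp_norm_def by simp

lemma primitive:
  assumes "g holomorphic_on ball 0 1"
  obtains F where "F holomorphic_on ball 0 1" "\<And>z. z \<in> ball 0 1 \<Longrightarrow> deriv F z = g z" "F 0 = c"
proof -
  obtain G where G: "\<And>x. x \<in> ball 0 1 \<Longrightarrow> (G has_field_derivative g x) (at x within ball 0 1)"
    by (rule holomorphic_convex_primitive'[OF convex_ball open_ball assms]) iprover
  have G': "(G has_field_derivative g x) (at x)" if "x \<in> ball 0 1" for x
  proof -
    have e: "at x within ball 0 1 = at x" by (rule at_within_open[OF that open_ball])
    show ?thesis using G[OF that] unfolding e .
  qed
  define F where "F z = G z - G 0 + c" for z
  have F': "\<And>x. x \<in> ball 0 1 \<Longrightarrow> (F has_field_derivative g x) (at x)"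
    unfolding F_def using G' by (auto intro!: derivative_eq_intros)
  show ?thesis
  proof
    show "F holomorphic_on ball 0 1" unfolding holomorphic_on_def field_differentiable_def
    proof
      fix x assume "x \<in> ball (0::complex) 1"
      hence "(F has_field_derivative g x) (at x within ball 0 1)"
        using F' has_field_derivative_at_within by blast
      thus "\<exists>f'. (F has_field_derivative f') (at x within ball 0 1)" by blast
    qed
    show "\<And>z. z \<in> ball 0 1 \<Longrightarrow> deriv F z = g z" using F' DERIV_imp_deriv by blast
    show "F 0 = c" by (simp add: F_def)
  qed
qed

lemma bnd_aux:
  fixes F D r na K h :: real
  assumes "0 < r" "na < r" "r - na \<le> D" "K = r/(r-na)" "F \<le> 1 + h" "0 \<le> F"
  shows "F*r/D \<le> K*(1+h)"
proof -
  have p: "0 < r - na" using assms by simp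
  have "F*r/D \<le> F*r/(r-na)"
    using p assms by (intro divide_left_mono) auto
  also have "\<dots> = K*F" using assms by simp
  also have "\<dots> \<le> K*(1+h)" using assms p by (intro mult_left_mono) auto
  finally show ?thesis .
qed
lemma le_one_powr:
  fixes x p :: real assumes "p \<ge> 1" "0 \<le> x" shows "x \<le> 1 + x powr p"
proof (cases "x \<le> 1")
  case True thus ?thesis by (smt (verit) powr_ge_zero)
next
  case False
  hence "x = x powr 1" by simp
  also have "\<dots> \<le> x powr p" using False assms by (intro powr_mono) auto
  finally show ?thesis by simp
qed
lemma norm_eq_aux:
  fixes r::real assumes "0 < r"
  shows "norm (f (r*cis t)/(r*cis t - a) * r * \<i> * cis t) = norm (f (r*cis t)) * r / norm (r*cis t - a)"
  using assms by (simp add: norm_mult norm_divide)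
lemma d_aux: fixes r::real assumes "0<r" shows "r - norm a \<le> norm (r*cis t - a)"
      using norm_triangle_ineq2[of "r*cis t" a] assms by (simp add: norm_mult)

lemma aux_div: "(c::real) * x \<le> K * (c + y) \<Longrightarrow> c > 0 \<Longrightarrow> x \<le> K * (1 + y / c)"
proof -
  assume a: "c * x \<le> K * (c + y)" "c > 0"
  have "K * (1 + y / c) = (K * (c + y)) / c" using a(2) by (simp add: field_simps)
  moreover have "x = (c * x) / c" using a(2) by simp
  have "(c * x) / c \<le> (K * (c + y)) / c" using a by (intro divide_right_mono) auto
  ultimately show ?thesis using a(2) by simp
qed

lemma point_eval:
  fixes f :: "complex \<Rightarrow> complex"
  assumes p: "p \<ge> 1" and hol: "f holomorphic_on ball 0 1" and a: "norm a < r" "r < 1"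
  shows "norm (f a) \<le> r/(r - norm a) * (1 + int_mean p f r)"
proof -
  have r0: "0 < r" using a norm_ge_zero[of a] by linarith
  have sub: "cball 0 r \<subseteq> ball (0::complex) 1" using a by auto
  have cont: "continuous_on (cball 0 r) f"
    using holomorphic_on_imp_continuous_on hol sub continuous_on_subset by blast
  have "((\<lambda>u. f u/(u-a)) has_contour_integral (2 * of_real pi * \<i> * f a)) (circlepath 0 r)"
  proof (rule Cauchy_integral_circlepath[OF cont])
    show "f holomorphic_on ball 0 r" using hol sub ball_subset_cball holomorphic_on_subset by blast
  qed (use a in simp)
  hence C': "((\<lambda>u. f u/(u-a)) has_contour_integral (2 * of_real pi * \<i> * f a)) (part_circlepath 0 r 0 (2*pi))"
    by (simp only: circlepath_def)
  have pp: "(0::real) < 2*pi" by simp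
  note X = iffD1[OF has_contour_integral_part_circlepath_iff[where a=0 and b="2*pi" and f="\<lambda>u. f u/(u-a)" and c=0 and r=r and I="2 * of_real pi * \<i> * f a", OF pp] C']
  have I: "((\<lambda>t. f (r*cis t)/(r*cis t - a) * r * \<i> * cis t) has_integral (2 * of_real pi * \<i> * f a)) {0..2*pi}"
    using X by (simp only: add_0_left)
  define h where "h t = norm (f (complex_of_real r * cis t)) powr p" for t
  have ccis: "continuous_on {0..2*pi} (\<lambda>t. f (complex_of_real r * cis t))"
  proof (rule continuous_on_compose2[OF cont])
    show "continuous_on {0..2*pi} (\<lambda>t. complex_of_real r * cis t)"
      by (intro continuous_intros)
    show "(\<lambda>t. complex_of_real r * cis t) ` {0..2*pi} \<subseteq> cball 0 r"
      using r0 by (auto simp: norm_mult)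
  qed
  have hcont: "continuous_on {0..2*pi} h"
    unfolding h_def using p
    by (intro continuous_on_powr' continuous_intros ccis) auto
  have hint: "h integrable_on {0..2*pi}"
    using hcont by (rule integrable_continuous_interval)
  define K where "K = r/(r - norm a)"
  have K0: "K > 0" unfolding K_def using a r0 by auto
  have bnd: "norm (f (r*cis t)/(r*cis t - a) * r * \<i> * cis t) \<le> K * (1 + h t)" for t
    unfolding norm_eq_aux[OF r0]
  proof (rule bnd_aux[OF r0 a(1) d_aux[OF r0] K_def])
    show "norm (f (r*cis t)) \<le> 1 + h t" unfolding h_def using p by (rule le_one_powr) simp
  qed simp
  have "norm (2 * of_real pi * \<i> * f a) = norm (integral {0..2*pi} (\<lambda>t. f (r*cis t)/(r*cis t - a) * r * \<i> * cis t))"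
    by (simp only: integral_unique[OF I])
  also have "\<dots> \<le> integral {0..2*pi} (\<lambda>t. K * (1 + h t))"
  proof (rule integral_norm_bound_integral)
    show "(\<lambda>t. K * (1 + h t)) integrable_on {0..2*pi}"
      by (intro integrable_continuous_interval continuous_intros hcont)
    show "(\<lambda>t. f (r*cis t)/(r*cis t - a) * r * \<i> * cis t) integrable_on {0..2*pi}"
      using I by (rule has_integral_integrable)
  qed (rule bnd)
  also have "\<dots> = K * (2*pi + integral {0..2*pi} h)"
  proof -
    have "integral {0..2*pi} (\<lambda>t. 1 + h t) = integral {0..2*pi} (\<lambda>t. 1) + integral {0..2*pi} h"
      by (intro integral_add integrable_continuous_interval[OF continuous_on_const] hint)
    also have "integral {0..2*pi} (\<lambda>t. 1::real) = 2*pi" by simp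
    finally show ?thesis by (simp only: integral_mult_right)
  qed
  finally have L: "norm (2 * of_real pi * \<i> * f a) \<le> K * (2*pi + integral {0..2*pi} h)" .
  have N: "norm (2 * of_real pi * \<i> * f a) = 2*pi*norm (f a)"
    by (simp add: norm_mult)
  have A: "norm (f a) \<le> K * (1 + integral {0..2*pi} h / (2*pi))"
    using L unfolding N by (rule aux_div) simp
  have B: "int_mean p f r = integral {0..2*pi} h / (2*pi)"
    unfolding int_mean_def h_def ..
  show ?thesis using A unfolding B K_def .
qed


lemma prim_Sp:
  assumes "g \<in> hardy p"
  obtains F where "F \<in> Sp p" "Sp_norm p F = hardy_norm p g" "\<And>z. z \<in> ball 0 1 \<Longrightarrow> deriv F z = g z"
proof -
  have hol: "g holomorphic_on ball 0 1" using assms unfolding hardy_def by auto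
  obtain F where F: "F holomorphic_on ball 0 1" "\<And>z. z \<in> ball 0 1 \<Longrightarrow> deriv F z = g z" "F 0 = 0"
    using primitive[OF hol, of 0] by blast
  have "deriv F \<in> hardy p" using hardy_cong(1)[of "deriv F" g p] F(2) assms by blast
  hence "F \<in> Sp p" using F(1) unfolding Sp_def by blast
  moreover have "Sp_norm p F = hardy_norm p g"
    unfolding Sp_norm_def using hardy_cong(2)[of "deriv F" g p] F(2,3) by simp
  ultimately show ?thesis using that F(2) by blast
qed

lemma sq_to_zero:
  fixes a b :: "nat \<Rightarrow> real"
  assumes "\<And>n. 0 \<le> a n" "\<And>n. a n \<le> b n" "b \<longlonglongrightarrow> 0"
  shows "a \<longlonglongrightarrow> 0"
  by (rule real_tendsto_sandwich[where f="\<lambda>n. 0" and g=a and h=b]) (use assms in auto)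

theorem theorem3p8:
  fixes p :: real and \<phi> :: "complex \<Rightarrow> complex"
  assumes "p > 1"
    and "\<phi> holomorphic_on ball 0 1"
    and "\<phi> ` ball 0 1 \<subseteq> ball 0 1"
    and "\<phi> \<in> Sp p"
  shows "(compact_op (deriv_comp_op \<phi>) (Sp p) (Sp_norm p) (Sp p) (Sp_norm p)
            \<longleftrightarrow> compact_op (comp_op \<phi>) (hardy p) (hardy_norm p) (Sp p) (Sp_norm p))
       \<and> (compact_op (comp_op \<phi>) (hardy p) (hardy_norm p) (Sp p) (Sp_norm p)
            \<longleftrightarrow> compact_op (diff_comp_op \<phi>) (hardy p) (hardy_norm p) (hardy p) (hardy_norm p))"
proof -
  note p = assms(1)
  have phib: "\<And>z. z \<in> ball 0 1 \<Longrightarrow> \<phi> z \<in> ball 0 1" using assms(3) by blast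
  have comphol: "(g \<circ> \<phi>) holomorphic_on ball 0 1" if "g holomorphic_on ball 0 1" for g
    using holomorphic_on_compose_gen[OF assms(2) that assms(3)] .
  have hhol: "g holomorphic_on ball 0 1" if "g \<in> hardy p" for g using that unfolding hardy_def by auto
  have Shol: "g holomorphic_on ball 0 1" if "g \<in> Sp p" for g using that unfolding Sp_def by auto
  have DC: "deriv_comp_op \<phi> f = comp_op \<phi> (deriv f)" for f
    unfolding deriv_comp_op_def comp_op_def ..
  have CSp: "comp_op \<phi> g \<in> Sp p \<longleftrightarrow> diff_comp_op \<phi> g \<in> hardy p" if "g \<in> hardy p" for g
    unfolding Sp_def comp_op_def diff_comp_op_def using comphol[OF hhol[OF that]] by simp
  have ddiff: "deriv (\<lambda>z. comp_op \<phi> g z - G z) z = diff_comp_op \<phi> g z - deriv G z"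
    if "g holomorphic_on ball 0 1" "G holomorphic_on ball 0 1" "z \<in> ball 0 1" for g G z
  proof -
    have "comp_op \<phi> g field_differentiable at z"
      unfolding comp_op_def using comphol[OF that(1)] that(3)
      by (intro holomorphic_on_imp_differentiable_at) auto
    moreover have "G field_differentiable at z"
      using that by (intro holomorphic_on_imp_differentiable_at) auto
    ultimately show ?thesis unfolding diff_comp_op_def comp_op_def[symmetric] by simp
  qed

  let ?X1 = "compact_op (deriv_comp_op \<phi>) (Sp p) (Sp_norm p) (Sp p) (Sp_norm p)"
  let ?X2 = "compact_op (comp_op \<phi>) (hardy p) (hardy_norm p) (Sp p) (Sp_norm p)"
  let ?X3 = "compact_op (diff_comp_op \<phi>) (hardy p) (hardy_norm p) (hardy p) (hardy_norm p)"

  have 12: "?X2" if X1: "?X1"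
    unfolding compact_op_def
  proof safe
    fix g assume g: "g \<in> hardy p"
    obtain F where F: "F \<in> Sp p" "\<And>z. z \<in> ball 0 1 \<Longrightarrow> deriv F z = g z"
      using prim_Sp[OF g] by blast
    have "deriv_comp_op \<phi> F \<in> Sp p" using X1 F(1) unfolding compact_op_def by blast
    moreover have "\<And>z. z \<in> ball 0 1 \<Longrightarrow> deriv_comp_op \<phi> F z = comp_op \<phi> g z"
      unfolding deriv_comp_op_def comp_op_def using F(2) phib by simp
    ultimately show "comp_op \<phi> g \<in> Sp p" using Sp_cong(1) by blast
  next
    fix u :: "nat \<Rightarrow> complex \<Rightarrow> complex"
    assume u: "\<forall>n. u n \<in> hardy p" and bd: "bdd_above (range (\<lambda>n. hardy_norm p (u n)))"
    have "\<forall>n. \<exists>F. F \<in> Sp p \<and> Sp_norm p F = hardy_norm p (u n) \<and> (\<forall>z\<in>ball 0 1. deriv F z = u n z)"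
      using prim_Sp u by metis
    then obtain U where U: "\<And>n. U n \<in> Sp p" "\<And>n. Sp_norm p (U n) = hardy_norm p (u n)"
        "\<And>n z. z \<in> ball 0 1 \<Longrightarrow> deriv (U n) z = u n z"
      by metis
    have "bdd_above (range (\<lambda>n. Sp_norm p (U n)))" using bd unfolding U(2) .
    then obtain r G where rG: "strict_mono r" "G \<in> Sp p"
        "(\<lambda>n. Sp_norm p (\<lambda>z. deriv_comp_op \<phi> (U (r n)) z - G z)) \<longlonglongrightarrow> 0"
      using X1 U(1) unfolding compact_op_def by blast
    have "Sp_norm p (\<lambda>z. deriv_comp_op \<phi> (U (r n)) z - G z) = Sp_norm p (\<lambda>z. comp_op \<phi> (u (r n)) z - G z)" for n
      by (rule Sp_cong(2)) (simp add: deriv_comp_op_def comp_op_def U(3)[OF phib])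
    with rG show "\<exists>r g. strict_mono r \<and> g \<in> Sp p \<and> (\<lambda>n. Sp_norm p (\<lambda>z. comp_op \<phi> (u (r n)) z - g z)) \<longlonglongrightarrow> 0"
      by auto
  qed

  have 21: "?X1" if X2: "?X2"
    unfolding compact_op_def
  proof safe
    fix f assume "f \<in> Sp p"
    hence "deriv f \<in> hardy p" unfolding Sp_def by auto
    thus "deriv_comp_op \<phi> f \<in> Sp p" using X2 unfolding DC compact_op_def by blast
  next
    fix u :: "nat \<Rightarrow> complex \<Rightarrow> complex"
    assume u: "\<forall>n. u n \<in> Sp p" and bd: "bdd_above (range (\<lambda>n. Sp_norm p (u n)))"
    have v: "\<forall>n. deriv (u n) \<in> hardy p" using u unfolding Sp_def by auto
    have bd': "bdd_above (range (\<lambda>n. hardy_norm p (deriv (u n))))"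
    proof -
      obtain M where M: "\<And>n. Sp_norm p (u n) \<le> M" using bd unfolding bdd_above_def by auto
      have "\<And>n. hardy_norm p (deriv (u n)) \<le> M" using hardy_le_Sp M order_trans by blast
      thus ?thesis unfolding bdd_above_def by auto
    qed
    obtain r G where rG: "strict_mono r" "G \<in> Sp p"
        "(\<lambda>n. Sp_norm p (\<lambda>z. comp_op \<phi> (deriv (u (r n))) z - G z)) \<longlonglongrightarrow> 0"
      using mp[OF spec[OF conjunct2[OF X2[unfolded compact_op_def]], of "\<lambda>n. deriv (u n)"], OF conjI[OF v bd']]
      by blast
    show "\<exists>r g. strict_mono r \<and> g \<in> Sp p \<and> (\<lambda>n. Sp_norm p (\<lambda>z. deriv_comp_op \<phi> (u (r n)) z - g z)) \<longlonglongrightarrow> 0"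
      unfolding DC by (intro exI[of _ r] exI[of _ G] conjI rG)
  qed

  have 23: "?X3" if X2: "?X2"
    unfolding compact_op_def
  proof safe
    fix g assume g: "g \<in> hardy p"
    have "comp_op \<phi> g \<in> Sp p" using X2 g unfolding compact_op_def by blast
    thus "diff_comp_op \<phi> g \<in> hardy p" using CSp[OF g] by blast
  next
    fix u :: "nat \<Rightarrow> complex \<Rightarrow> complex"
    assume u: "\<forall>n. u n \<in> hardy p" and bd: "bdd_above (range (\<lambda>n. hardy_norm p (u n)))"
    obtain r G where rG: "strict_mono r" "G \<in> Sp p"
        "(\<lambda>n. Sp_norm p (\<lambda>z. comp_op \<phi> (u (r n)) z - G z)) \<longlonglongrightarrow> 0"
      using mp[OF spec[OF conjunct2[OF X2[unfolded compact_op_def]], of u], OF conjI[OF u bd]] by blast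
    have Gh: "deriv G \<in> hardy p" using rG(2) unfolding Sp_def by auto
    have eq: "hardy_norm p (\<lambda>z. diff_comp_op \<phi> (u (r n)) z - deriv G z)
        = hardy_norm p (deriv (\<lambda>z. comp_op \<phi> (u (r n)) z - G z))" for n
      by (rule hardy_cong(2)) (simp add: ddiff[OF hhol[OF u[rule_format]] Shol[OF rG(2)]])
    have "(\<lambda>n. hardy_norm p (\<lambda>z. diff_comp_op \<phi> (u (r n)) z - deriv G z)) \<longlonglongrightarrow> 0"
      unfolding eq by (rule sq_to_zero[OF hardy_norm_nonneg hardy_le_Sp rG(3)])
    thus "\<exists>r g. strict_mono r \<and> g \<in> hardy p \<and> (\<lambda>n. hardy_norm p (\<lambda>z. diff_comp_op \<phi> (u (r n)) z - g z)) \<longlonglongrightarrow> 0"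
      using rG(1) Gh by blast
  qed

  have 32: "?X2" if X3: "?X3"
    unfolding compact_op_def
  proof safe
    fix g assume g: "g \<in> hardy p"
    have "diff_comp_op \<phi> g \<in> hardy p" using X3 g unfolding compact_op_def by blast
    thus "comp_op \<phi> g \<in> Sp p" using CSp[OF g] by blast
  next
    fix u :: "nat \<Rightarrow> complex \<Rightarrow> complex"
    assume u: "\<forall>n. u n \<in> hardy p" and bd: "bdd_above (range (\<lambda>n. hardy_norm p (u n)))"
    obtain r h where rh: "strict_mono r" "h \<in> hardy p"
        "(\<lambda>n. hardy_norm p (\<lambda>z. diff_comp_op \<phi> (u (r n)) z - h z)) \<longlonglongrightarrow> 0"
      using mp[OF spec[OF conjunct2[OF X3[unfolded compact_op_def]], of u], OF conjI[OF u bd]] by blast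
    define a where "a = \<phi> 0"
    have a: "norm a < 1" using phib[of 0] unfolding a_def by simp
    define \<rho> where "\<rho> = (1 + norm a) / 2"
    have \<rho>: "norm a < \<rho>" "\<rho> < 1" "0 < \<rho>" using a norm_ge_zero[of a] unfolding \<rho>_def by (auto intro: add_pos_nonneg)
    obtain B where B: "\<And>n. hardy_norm p (u n) \<le> B" using bd unfolding bdd_above_def by auto
    have "norm (u n a) \<le> \<rho>/(\<rho> - norm a) * (1 + B powr p)" for n
    proof -
      have "norm (u n a) \<le> \<rho>/(\<rho> - norm a) * (1 + int_mean p (u n) \<rho>)"
        using point_eval[of p "u n" a \<rho>] p hhol u \<rho> by auto
      also have "\<dots> \<le> \<rho>/(\<rho> - norm a) * (1 + B powr p)"
      proof (intro mult_left_mono add_left_mono)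
        have "int_mean p (u n) \<rho> \<le> hardy_norm p (u n) powr p"
          using int_mean_le[of "u n" p \<rho>] u \<rho> p by auto
        also have "\<dots> \<le> B powr p"
          using B[of n] hardy_norm_nonneg p by (intro powr_mono2) auto
        finally show "int_mean p (u n) \<rho> \<le> B powr p" .
      qed (use \<rho> in auto)
      finally show ?thesis .
    qed
    hence "bounded (range (\<lambda>n. u (r n) a))"
      by (intro boundedI) auto
    then obtain c s where cs: "strict_mono s" "((\<lambda>n. u (r n) a) \<circ> s) \<longlonglongrightarrow> c"
      using bounded_imp_convergent_subsequence by blast
    obtain G where G: "G holomorphic_on ball 0 1" "\<And>z. z \<in> ball 0 1 \<Longrightarrow> deriv G z = h z" "G 0 = c"
      using primitive[OF hhol[OF rh(2)], of c] by blast
    have "deriv G \<in> hardy p" using hardy_cong(1)[of "deriv G" h p] G(2) rh(2) by blast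
    hence GS: "G \<in> Sp p" using G(1) unfolding Sp_def by blast
    have eqn: "Sp_norm p (\<lambda>z. comp_op \<phi> (u m) z - G z)
       = norm (u m a - c) + hardy_norm p (\<lambda>z. diff_comp_op \<phi> (u m) z - h z)" for m
    proof -
      have "hardy_norm p (deriv (\<lambda>z. comp_op \<phi> (u m) z - G z)) = hardy_norm p (\<lambda>z. diff_comp_op \<phi> (u m) z - h z)"
        by (rule hardy_cong(2)) (simp add: ddiff[OF hhol[OF u[rule_format]] G(1)] G(2))
      thus ?thesis unfolding Sp_norm_def comp_op_def G(3) by (simp add: a_def)
    qed
    have l1: "(\<lambda>n. norm (u (r (s n)) a - c)) \<longlonglongrightarrow> 0"
      using cs(2) unfolding o_def by (simp add: tendsto_norm_zero_iff LIM_zero_iff)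
    have l2: "(\<lambda>n. hardy_norm p (\<lambda>z. diff_comp_op \<phi> (u (r (s n))) z - h z)) \<longlonglongrightarrow> 0"
      using LIMSEQ_subseq_LIMSEQ[OF rh(3) cs(1)] unfolding o_def .
    have "(\<lambda>n. Sp_norm p (\<lambda>z. comp_op \<phi> (u ((r \<circ> s) n)) z - G z)) \<longlonglongrightarrow> 0"
      unfolding eqn o_def using tendsto_add[OF l1 l2] by simp
    moreover have "strict_mono (r \<circ> s)" using rh(1) cs(1) by (rule strict_mono_o)
    ultimately show "\<exists>r g. strict_mono r \<and> g \<in> Sp p \<and> (\<lambda>n. Sp_norm p (\<lambda>z. comp_op \<phi> (u (r n)) z - g z)) \<longlonglongrightarrow> 0"
      using GS by blast
  qed
  show ?thesis using 12 21 23 32 by blast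
qed

end
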